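(* For every integer $n\ge1$, $\operatorname{num}_{\mathcal T}(n,-1)=3^{v_3(n!)}$. In particular, for every $n\ge1$, $$\operatorname{num}_{\mathcal T}(3n,-1)=\operatorname{num}_{\mathcal T}(3n+1,-1)=\operatorname{num}_{\mathcal T}(3n+2,-1)=3^{v_3((3n)!)}.$$
   Context: $v_3(M)$ is the exponent of $3$ in the positive integer $M$. A ternary partition of $n$ is a partition of $n$ (finite nonincreasing sequence of positive integers summing to $n$) all of whose parts are powers of $3$ (including $1$); $\mathcal T(n)$ is the set of ternary partitions of $n$, and $m_\lambda(i)$ the number of parts of $\lambda$ equal to $i$. For $\lambda\in\mathcal T(n)$ let $h_{\mathcal T,\lambda}(x)=\prod_{k\ge0}(1+x^{3^k})^{\lfloor n/3^k\rfloor-m_\lambda(3^k)}$. Let $G_{\mathcal T}(n,x)=\gcd\{h_{\mathcal T,\lambda}(x):\lambda\in\mathcal T(n)\}$ in $\mathbb{Z}[x]$ (normalized with positive leading coefficient), and $\operatorname{num}_{\mathcal T}(n,x)=\frac{1}{G_{\mathcal T}(n,x)}\sum_{\lambda\in\mathcal T(n)}h_{\mathcal T,\lambda}(x)\in\mathbb{Z}[x]$. *)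

theory Defs
  imports "HOL-Computational_Algebra.Computational_Algebra" "HOL-Library.Multiset"
begin

definition ternary_partitions :: "nat \<Rightarrow> nat multiset set" where
  "ternary_partitions n = {lam. (\<forall>x\<in>#lam. \<exists>k. x = 3 ^ k) \<and> sum_mset lam = n}"

text \<open>h_{T,lambda}(x) = prod_{k>=0} (1 + x^(3^k))^(floor(n/3^k) - m_lambda(3^k)).
  Factors with 3^k > n are 1 (exponent 0), so the product is taken over k with 3^k <= n.\<close>
definition h_T :: "nat \<Rightarrow> nat multiset \<Rightarrow> int poly" where
  "h_T n lam = (\<Prod>k\<in>{k. 3 ^ k \<le> n}. (1 + monom 1 (3 ^ k)) ^ (n div 3 ^ k - count lam (3 ^ k)))"

definition G_T :: "nat \<Rightarrow> int poly" where
  "G_T n = Gcd (h_T n ` ternary_partitions n)"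

definition num_T :: "nat \<Rightarrow> int poly" where
  "num_T n = (\<Sum>lam\<in>ternary_partitions n. h_T n lam) div G_T n"

end

theory Submission
  imports Defs
begin

definition Y :: "nat \<Rightarrow> int poly" where "Y k = monom 1 (3 ^ k)"

fun P :: "nat \<Rightarrow> int poly" where
  "P 0 = 1 + Y 0"
| "P (Suc k) = 1 - Y k + Y k ^ 2"

lemma Y_Suc: "Y (Suc k) = Y k ^ 3"
  by (simp add: Y_def monom_power mult.commute)

lemma A_Suc: "1 + Y (Suc k) = (1 + Y k) * P (Suc k)"
  by (simp add: Y_Suc algebra_simps power2_eq_square power3_eq_cube)

lemma A_prod: "1 + Y k = (\<Prod>j\<in>{..k}. P j)"
  by (induction k) (simp_all add: A_Suc prod.atMost_Suc)

lemma poly_Y: "poly (Y k) (-1) = -1"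
  by (simp add: Y_def poly_monom odd_pos)

lemma poly_P0: "poly (P 0) (-1) = 0"
  by (simp add: poly_Y)

lemma poly_PS: "poly (P (Suc k)) (-1) = 3"
  by (simp add: poly_Y)

lemma lead_P: "lead_coeff (P j) = 1"
proof (cases j)
  case 0
  have "(1::int poly) + monom 1 (Suc 0) = [:1,1:]"
    by (simp add: monom_Suc monom_0 one_pCons)
  then show ?thesis using 0 by (simp add: Y_def)
next
  case (Suc k)
  have d1: "degree (Y k ^ 2) = 2 * 3 ^ k"
    by (simp add: Y_def degree_power_eq degree_monom_eq)
  have d2: "degree (1 - Y k) \<le> 3 ^ k"
    using degree_diff_le_max[of 1 "Y k"] by (simp add: Y_def degree_monom_eq)
  have "degree (1 - Y k) < degree (Y k ^ 2)" 
  proof -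
    have "(0::nat) < 3 ^ k" by simp
    then show ?thesis using d1 d2 by linarith
  qed
  then have "lead_coeff ((1 - Y k) + Y k ^ 2) = lead_coeff (Y k ^ 2)"
    by (rule lead_coeff_add_le)
  also have "\<dots> = 1" by (simp add: Y_def lead_coeff_power degree_monom_eq)
  finally show ?thesis using Suc by simp
qed

lemma P_nz: "P j \<noteq> 0"
  using lead_P[of j] by auto

lemma P_dvd_A: "P i dvd (1 + Y i)"
  by (cases i) (simp_all add: A_Suc)

lemma A_dvd: "i \<le> k \<Longrightarrow> (1 + Y i) dvd (1 + Y k)"
proof (induction k)
  case 0 then show ?case by simp
next
  case (Suc k)
  show ?case
  proof (cases "i = Suc k")
    case False
    then have "(1 + Y i) dvd (1 + Y k)" using Suc by simp
    then show ?thesis by (simp add: A_Suc)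
  qed simp
qed

lemma P_minus_3: "P (Suc k) - 3 = (1 + Y k) * (Y k - 2)"
  by (simp add: algebra_simps power2_eq_square)

lemma unit_if_dvd_3:
  assumes "d dvd (3 :: int poly)" "d dvd P i"
  shows "is_unit d"
proof -
  have "degree d \<le> degree (3 :: int poly)" using assms(1) by (rule dvd_imp_degree_le) simp
  then have dg: "degree d = 0" by simp
  obtain f where f: "P i = d * f" using assms(2) by blast
  have "lead_coeff d * lead_coeff f = 1" using f lead_P[of i] by (simp add: lead_coeff_mult)
  then have u: "is_unit (lead_coeff d)" by (metis dvd_triv_left)
  have "d = [:lead_coeff d:]" using dg by (metis degree_0_id)
  then show ?thesis using u is_unit_const_poly_iff by metis
qed

lemma P_coprime_lt:
  assumes "i < j" shows "coprime (P i) (P j)"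
proof (rule coprimeI)
  fix d assume d1: "d dvd P i" and d2: "d dvd P j"
  obtain k where j: "j = Suc k" and ik: "i \<le> k" using assms by (cases j) auto
  have "d dvd (1 + Y k)" using d1 P_dvd_A[of i] A_dvd[OF ik] dvd_trans by blast
  then have "d dvd P j - 3" using j P_minus_3[of k] by simp
  then have "d dvd P j - (P j - 3)" using d2 dvd_diff by blast
  then have "d dvd 3" by simp
  then show "is_unit d" using d1 unit_if_dvd_3 by blast
qed

lemma P_coprime: "i \<noteq> j \<Longrightarrow> coprime (P i) (P j)"
  by (metis P_coprime_lt coprime_commute linorder_neq_iff)

definition K :: "nat \<Rightarrow> nat set" where "K n = {k. 3 ^ k \<le> n}"
definition S :: "nat \<Rightarrow> nat \<Rightarrow> nat" where "S n j = (\<Sum>k\<in>{k\<in>K n. j \<le> k}. n div 3 ^ k)"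
definition cnt :: "nat \<Rightarrow> nat multiset \<Rightarrow> nat" where
  "cnt j lam = size (filter_mset (\<lambda>x. 3 ^ j \<le> x) lam)"
definition E :: "nat \<Rightarrow> nat \<Rightarrow> nat multiset \<Rightarrow> nat" where "E n j lam = S n j - cnt j lam"

lemma finite_K: "finite (K n)"
proof -
  have "K n \<subseteq> {..n}"
  proof
    fix k assume "k \<in> K n"
    then have "3 ^ k \<le> n" by (simp add: K_def)
    moreover have "k < 2 ^ k" by (rule less_exp)
    moreover have "(2::nat) ^ k \<le> 3 ^ k" by (rule power_mono) auto
    ultimately have "k \<le> n" by linarith
    then show "k \<in> {..n}" by simp
  qed
  then show ?thesis using finite_subset by blast
qed

lemma K_down: "j \<le> k \<Longrightarrow> k \<in> K n \<Longrightarrow> j \<in> K n"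
proof -
  assume a: "j \<le> k" "k \<in> K n"
  have "(3::nat) ^ j \<le> 3 ^ k" using a(1) by simp
  then show ?thesis using a(2) unfolding K_def mem_Collect_eq by (rule le_trans)
qed

lemma count_bound: "count M x * x \<le> sum_mset (M :: nat multiset)"
  by (induction M) (auto simp: algebra_simps)

lemma cnt_bound_gen: "size (filter_mset (\<lambda>x. c \<le> x) M) * c \<le> sum_mset (M :: nat multiset)"
  by (induction M) auto

lemma mem_le_sum: "x \<in># M \<Longrightarrow> x \<le> sum_mset (M :: nat multiset)"
proof -
  assume "x \<in># M"
  then obtain M' where "M = add_mset x M'" by (blast dest: multi_member_split)
  then show ?thesis by simp
qed

lemma count_sum:
  assumes "\<forall>x\<in>#M. \<exists>k. x = 3 ^ k \<and> k \<in> K n"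
  shows "(\<Sum>k\<in>{k\<in>K n. j \<le> k}. count M (3 ^ k)) = cnt j M"
  using assms
proof (induction M)
  case empty
  then show ?case by (simp add: cnt_def)
next
  case (add a M)
  then obtain t where t: "a = 3 ^ t" "t \<in> K n" by auto
  have IH: "(\<Sum>k\<in>{k\<in>K n. j \<le> k}. count M (3 ^ k)) = cnt j M" using add by auto
  have "(\<Sum>k\<in>{k\<in>K n. j \<le> k}. count (add_mset a M) (3 ^ k))
      = (\<Sum>k\<in>{k\<in>K n. j \<le> k}. count M (3 ^ k) + (if k = t then 1 else 0))"
    by (intro sum.cong) (auto simp: t)
  also have "\<dots> = cnt j M + (\<Sum>k\<in>{k\<in>K n. j \<le> k}. (if k = t then 1 else 0))"
    by (simp add: sum.distrib IH)
  also have "(\<Sum>k\<in>{k\<in>K n. j \<le> k}. (if k = t then 1 else 0)) = (if j \<le> t then 1 else (0::nat))"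
    using finite_K[of n] t by (simp add: sum.delta)
  also have "cnt j M + \<dots> = cnt j (add_mset a M)"
    by (simp add: cnt_def t)
  finally show ?case .
qed

lemma T_elem: "lam \<in> ternary_partitions n \<Longrightarrow> \<forall>x\<in>#lam. \<exists>k. x = 3 ^ k \<and> k \<in> K n"
proof
  fix x assume lam: "lam \<in> ternary_partitions n" and x: "x \<in># lam"
  then obtain k where k: "x = 3 ^ k" by (auto simp: ternary_partitions_def)
  have "x \<le> n" using mem_le_sum[OF x] lam by (simp add: ternary_partitions_def)
  then show "\<exists>k. x = 3 ^ k \<and> k \<in> K n" using k by (auto simp: K_def)
qed

lemma T_sum: "lam \<in> ternary_partitions n \<Longrightarrow> sum_mset lam = n"
  by (simp add: ternary_partitions_def)

lemma count_le: "lam \<in> ternary_partitions n \<Longrightarrow> count lam (3 ^ k) \<le> n div 3 ^ k"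
  using count_bound[of lam "3 ^ k"] T_sum[of lam n]
  by (simp add: less_eq_div_iff_mult_less_eq)

lemma cnt_le: "lam \<in> ternary_partitions n \<Longrightarrow> cnt j lam \<le> n div 3 ^ j"
  using cnt_bound_gen[of "3 ^ j" lam] T_sum[of lam n]
  by (simp add: less_eq_div_iff_mult_less_eq cnt_def)

lemma h_formula:
  assumes lam: "lam \<in> ternary_partitions n"
  shows "h_T n lam = (\<Prod>j\<in>K n. P j ^ E n j lam)"
proof -
  define e where "e k = n div 3 ^ k - count lam (3 ^ k)" for k
  have "h_T n lam = (\<Prod>k\<in>K n. (\<Prod>j\<in>{j\<in>K n. j \<le> k}. P j) ^ e k)"
    unfolding h_T_def K_def[symmetric] e_def
  proof (intro prod.cong refl)
    fix k assume k: "k \<in> K n"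
    have "{..k} = {j\<in>K n. j \<le> k}" using K_down[OF _ k] by auto
    then have "1 + monom 1 (3 ^ k) = (\<Prod>j\<in>{j\<in>K n. j \<le> k}. P j)"
      using A_prod[of k] by (simp add: Y_def)
    then show "(1 + monom 1 (3 ^ k)) ^ (n div 3 ^ k - count lam (3 ^ k))
       = (\<Prod>j\<in>{j\<in>K n. j \<le> k}. P j) ^ (n div 3 ^ k - count lam (3 ^ k))" by simp
  qed
  also have "\<dots> = (\<Prod>k\<in>K n. \<Prod>j\<in>{j\<in>K n. j \<le> k}. P j ^ e k)"
    by (simp add: prod_power_distrib)
  also have "\<dots> = (\<Prod>j\<in>K n. \<Prod>k\<in>{k\<in>K n. j \<le> k}. P j ^ e k)"
    by (rule prod.swap_restrict[OF finite_K finite_K])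
  also have "\<dots> = (\<Prod>j\<in>K n. P j ^ (\<Sum>k\<in>{k\<in>K n. j \<le> k}. e k))"
    by (simp add: power_sum)
  also have "\<dots> = (\<Prod>j\<in>K n. P j ^ E n j lam)"
  proof (intro prod.cong refl)
    fix j assume "j \<in> K n"
    have "(\<Sum>k\<in>{k\<in>K n. j \<le> k}. e k)
        = (\<Sum>k\<in>{k\<in>K n. j \<le> k}. n div 3 ^ k) - (\<Sum>k\<in>{k\<in>K n. j \<le> k}. count lam (3 ^ k))"
      unfolding e_def by (rule sum_subtractf_nat) (rule count_le[OF lam])
    also have "\<dots> = E n j lam"
      using count_sum[OF T_elem[OF lam], of j] by (simp add: E_def S_def)
    finally show "P j ^ (\<Sum>k\<in>{k\<in>K n. j \<le> k}. e k) = P j ^ E n j lam" by simp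
  qed
  finally show ?thesis .
qed

definition leg :: "nat \<Rightarrow> nat" where "leg n = (\<Sum>k\<in>{1..n}. n div 3 ^ k)"

lemma prime3: "prime (3::nat)"
proof -
  have "{2..<3::nat} = {2}" by auto
  then show ?thesis by (simp add: prime_nat_iff')
qed

lemma card_dvd: 
  assumes "m > 0"
  shows "card {k\<in>{1..m}. (3::nat) ^ k dvd m} = multiplicity 3 m"
proof -
  define v where "v = multiplicity (3::nat) m"
  have iff: "(3::nat) ^ k dvd m \<longleftrightarrow> k \<le> v" for k
    using power_dvd_iff_le_multiplicity[of m 3 k] assms by (simp add: v_def)
  have "3 ^ v dvd m" using iff by simp
  then have "3 ^ v \<le> m" using assms by (simp add: dvd_imp_le)
  moreover have "v < 2 ^ v" by (rule less_exp)
  moreover have "(2::nat) ^ v \<le> 3 ^ v" by (rule power_mono) auto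
  ultimately have vm: "v \<le> m" by linarith
  have "{k\<in>{1..m}. (3::nat) ^ k dvd m} = {1..v}" unfolding iff using vm by auto
  then show ?thesis by (simp add: v_def)
qed

lemma leg_Suc: "leg (Suc n) = leg n + multiplicity 3 (Suc n)"
proof -
  have "leg (Suc n) = (\<Sum>k\<in>{1..Suc n}. n div 3 ^ k + (if (3::nat) ^ k dvd Suc n then 1 else 0))"
    unfolding leg_def by (intro sum.cong refl) (auto simp: div_Suc dvd_eq_mod_eq_0)
  also have "\<dots> = (\<Sum>k\<in>{1..Suc n}. n div 3 ^ k) + card {k\<in>{1..Suc n}. (3::nat) ^ k dvd Suc n}"
    unfolding sum.distrib
  proof -
    have "(\<Sum>k\<in>{1..Suc n}. if (3::nat) ^ k dvd Suc n then 1 else 0) = card {k\<in>{1..Suc n}. (3::nat) ^ k dvd Suc n}"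
      by (subst card_eq_sum, subst sum.inter_filter) auto
    then show "(\<Sum>k\<in>{1..Suc n}. n div 3 ^ k) + (\<Sum>k\<in>{1..Suc n}. if (3::nat) ^ k dvd Suc n then 1 else 0)
      = (\<Sum>k\<in>{1..Suc n}. n div 3 ^ k) + card {k\<in>{1..Suc n}. (3::nat) ^ k dvd Suc n}" by (simp only:)
  qed
  also have "(\<Sum>k\<in>{1..Suc n}. n div 3 ^ k) = leg n + n div 3 ^ Suc n"
    by (simp add: leg_def)
  also have "n div 3 ^ Suc n = 0"
  proof -
    have "n < 2 ^ n" by (rule less_exp)
    moreover have "(2::nat) ^ n \<le> 3 ^ n" by (rule power_mono) auto
    moreover have "(3::nat) ^ n \<le> 3 ^ Suc n" by simp
    ultimately have "n < 3 ^ Suc n" by linarith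
    then show ?thesis by (rule div_less)
  qed
  finally show ?thesis using card_dvd[of "Suc n"] by simp
qed

lemma legendre: "multiplicity (3::nat) (fact n) = leg n"
proof (induction n)
  case 0 then show ?case by (simp add: leg_def)
next
  case (Suc n)
  have "multiplicity (3::nat) (fact (Suc n)) = multiplicity 3 (Suc n * fact n)" by simp
  also have "\<dots> = multiplicity 3 (Suc n) + multiplicity (3::nat) (fact n)"
    by (rule prime_elem_multiplicity_mult_distrib) (auto simp: prime3 intro: prime_imp_prime_elem)
  also have "\<dots> = multiplicity 3 (Suc n) + leg n" using Suc.IH by (simp only:)
  also have "\<dots> = leg (Suc n)" using leg_Suc[of n] by (simp only: add.commute)
  finally show ?case .
qed

lemma size_le_sum: "(\<forall>x\<in>#M. (1::nat) \<le> x) \<Longrightarrow> size M \<le> sum_mset M"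
  by (induction M) auto

lemma size_lt_sum:
  "(\<forall>x\<in>#M. (1::nat) \<le> x) \<Longrightarrow> M \<noteq> replicate_mset (sum_mset M) 1 \<Longrightarrow> size M < sum_mset M"
proof (induction M)
  case empty then show ?case by simp
next
  case (add a M)
  show ?case
  proof (cases "a = 1")
    case True
    then have "M \<noteq> replicate_mset (sum_mset M) 1" using add.prems by auto
    then have "size M < sum_mset M" using add by auto
    then show ?thesis using True by simp
  next
    case False
    then have "a \<ge> 2" using add.prems by auto
    moreover have "size M \<le> sum_mset M" using add.prems size_le_sum by auto
    ultimately show ?thesis by simp
  qed
qed

lemma filter_all: "(\<forall>x\<in>#M. Q x) \<Longrightarrow> filter_mset Q M = M"
  by (induction M) auto

lemma filter_rep: "filter_mset Q (replicate_mset k x) = (if Q x then replicate_mset k x else {#})"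
  by (induction k) auto

lemma K_le: "k \<in> K n \<Longrightarrow> k \<le> n"
proof -
  assume "k \<in> K n"
  then have "3 ^ k \<le> n" by (simp add: K_def)
  moreover have "k < 2 ^ k" by (rule less_exp)
  moreover have "(2::nat) ^ k \<le> 3 ^ k" by (rule power_mono) auto
  ultimately show "k \<le> n" by linarith
qed

lemma T_ge1: "lam \<in> ternary_partitions n \<Longrightarrow> \<forall>x\<in>#lam. (1::nat) \<le> x"
  by (auto simp: ternary_partitions_def)

lemma finite_T: "finite (ternary_partitions n)"
proof -
  have "ternary_partitions n \<subseteq> (\<Union>s\<in>{..n}. multisets_of_size {..n} s)"
  proof
    fix lam assume lam: "lam \<in> ternary_partitions n"
    have "set_mset lam \<subseteq> {..n}" using mem_le_sum T_sum[OF lam] by auto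
    moreover have "size lam \<le> n" using size_le_sum[OF T_ge1[OF lam]] T_sum[OF lam] by simp
    ultimately show "lam \<in> (\<Union>s\<in>{..n}. multisets_of_size {..n} s)"
      by (auto simp: multisets_of_size_def)
  qed
  moreover have "finite (\<Union>s\<in>{..n}. multisets_of_size {..n} s)" by auto
  ultimately show ?thesis using finite_subset by blast
qed

definition mu :: "nat \<Rightarrow> nat \<Rightarrow> nat multiset" where
  "mu n j = replicate_mset (n div 3 ^ j) (3 ^ j) + replicate_mset (n mod 3 ^ j) 1"

lemma mu_T: "mu n j \<in> ternary_partitions n"
proof -
  have "\<forall>x\<in>#mu n j. \<exists>k. x = 3 ^ k"
    by (auto simp: mu_def intro: exI[of _ 0] split: if_splits)
  moreover have "sum_mset (mu n j) = n" by (simp add: mu_def div_mult_mod_eq)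
  ultimately show ?thesis by (simp add: ternary_partitions_def)
qed

lemma cnt_mu: "cnt j (mu n j) = n div 3 ^ j"
proof (cases j)
  case 0 then show ?thesis by (simp add: cnt_def mu_def filter_rep)
next
  case (Suc i)
  have "(1::nat) \<le> 3 ^ i" by simp
  moreover have "(3::nat) ^ j = 3 * 3 ^ i" using Suc by simp
  ultimately have "\<not> (3::nat) ^ j \<le> 1" by linarith
  then show ?thesis by (simp add: cnt_def mu_def filter_rep)
qed

lemma mu0: "mu n 0 = replicate_mset n 1"
  by (simp add: mu_def)

lemma pow3_gt1: "j > 0 \<Longrightarrow> \<not> (3::nat) ^ j \<le> 1"
proof -
  assume "j > 0"
  then obtain i where "j = Suc i" by (cases j) auto
  moreover have "(1::nat) \<le> 3 ^ i" by simp
  ultimately have "(3::nat) ^ j = 3 * 3 ^ i" "(1::nat) \<le> 3 ^ i" by simp_all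
  then show ?thesis by linarith
qed

lemma cnt_rep1: "cnt j (replicate_mset n 1) = (if j = 0 then n else 0)"
  using pow3_gt1[of j] by (simp add: cnt_def filter_rep)

lemma main:
  assumes n1: "n \<ge> 1"
  shows "poly (num_T n) (-1) = 3 ^ leg n"
proof -
  define T where "T = ternary_partitions n"
  define m where "m j = S n j - n div 3 ^ j" for j
  define R where "R lam = (\<Prod>j\<in>K n. P j ^ (E n j lam - m j))" for lam
  define D where "D = (\<Prod>j\<in>K n. P j ^ m j)"
  define lam0 where "lam0 = replicate_mset n (1::nat)"
  have finT: "finite T" unfolding T_def by (rule finite_T)
  have K0: "0 \<in> K n" using n1 by (simp add: K_def)
  have finK: "finite (K n)" by (rule finite_K)
  have Sge: "n div 3 ^ j \<le> S n j" if "j \<in> K n" for j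
    unfolding S_def by (rule member_le_sum) (use that finK in auto)
  have Ege: "m j \<le> E n j lam" if "lam \<in> T" for j lam
    using cnt_le[of lam n j] that by (simp add: m_def E_def T_def)
  have hD: "h_T n lam = D * R lam" if lam: "lam \<in> T" for lam
  proof -
    have "h_T n lam = (\<Prod>j\<in>K n. P j ^ E n j lam)" using lam h_formula by (simp add: T_def)
    also have "\<dots> = (\<Prod>j\<in>K n. P j ^ m j * P j ^ (E n j lam - m j))"
    proof (intro prod.cong refl)
      fix j assume "j \<in> K n"
      have "E n j lam = m j + (E n j lam - m j)" using Ege[OF lam, of j] by simp
      then show "P j ^ E n j lam = P j ^ m j * P j ^ (E n j lam - m j)"
        by (metis power_add)
    qed
    also have "\<dots> = D * R lam" by (simp add: D_def R_def prod.distrib)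
    finally show ?thesis .
  qed
  have Dnz: "D \<noteq> 0" unfolding D_def using finK P_nz by auto
  have leadD: "lead_coeff D = 1" unfolding D_def by (simp add: lead_coeff_prod lead_coeff_power lead_P)
  have muT: "mu n j \<in> T" for j unfolding T_def by (rule mu_T)
  have Rmu: "E n j (mu n j) - m j = 0" for j
    by (simp add: E_def m_def cnt_mu)
  have lam0T: "lam0 \<in> T" using muT[of 0] by (simp add: mu0 lam0_def)
  have GD: "G_T n = D"
  proof -
    let ?G = "Gcd (h_T n ` T)"
    have "D dvd ?G" by (rule Gcd_greatest) (auto simp: hD)
    then obtain Q where GQ: "?G = D * Q" by blast
    have QR: "Q dvd R lam" if "lam \<in> T" for lam
    proof -
      have "?G dvd h_T n lam" using that by (intro Gcd_dvd) auto
      then have "D * Q dvd D * R lam" using GQ hD[OF that] by simp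
      then show ?thesis using Dnz by simp
    qed
    have cQ: "coprime Q (P j)" if j: "j \<in> K n" for j
    proof -
      have "coprime (P j) (R (mu n j))" unfolding R_def
      proof (rule prod_coprime_right)
        fix i assume "i \<in> K n"
        show "coprime (P j) (P i ^ (E n i (mu n j) - m i))"
        proof (cases "i = j")
          case True then show ?thesis using Rmu[of j] by simp
        next
          case False then show ?thesis using P_coprime[of j i] by simp
        qed
      qed
      then show ?thesis using QR[OF muT[of j]]
        by (metis coprime_commute coprime_divisors dvd_refl)
    qed
    have "coprime Q (R lam0)" unfolding R_def
      by (rule prod_coprime_right) (simp add: cQ)
    then have uQ: "is_unit Q" using QR[OF lam0T] by (metis coprime_common_divisor dvd_refl)
    have "normalize D = D"
      using leadD by (simp add: normalize_poly_eq_map_poly map_poly_idI)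
    then show ?thesis unfolding G_T_def T_def[symmetric]
      by (metis GQ normalize_Gcd normalize_mult_unit_right uQ)
  qed
  have numR: "num_T n = (\<Sum>lam\<in>T. R lam)"
  proof -
    have "(\<Sum>lam\<in>T. h_T n lam) = D * (\<Sum>lam\<in>T. R lam)"
      by (simp add: hD sum_distrib_left)
    then show ?thesis unfolding num_T_def GD T_def[symmetric] using Dnz by simp
  qed
  have polyR: "poly (R lam) (-1) = (\<Prod>j\<in>K n. poly (P j) (-1) ^ (E n j lam - m j))" for lam
    by (simp add: R_def poly_prod poly_power)
  have Rzero: "poly (R lam) (-1) = 0" if lam: "lam \<in> T" "lam \<noteq> lam0" for lam
  proof -
    have ge1: "\<forall>x\<in>#lam. (1::nat) \<le> x" using T_ge1 lam by (simp add: T_def)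
    have sl: "size lam < n"
      using size_lt_sum[OF ge1] lam T_sum[of lam n] by (simp add: lam0_def T_def)
    have "cnt 0 lam = size lam" using filter_all[OF ge1] by (simp add: cnt_def)
    moreover have "n \<le> S n 0" using Sge[OF K0] by simp
    ultimately have "E n 0 lam - m 0 > 0" using sl by (simp add: E_def m_def)
    then have "poly (P 0) (-1) ^ (E n 0 lam - m 0) = 0" by (simp add: poly_Y)
    then show ?thesis unfolding polyR using K0 finK by (metis prod_zero_iff)
  qed
  have ex0: "E n j lam0 - m j = (if j = 0 then 0 else n div 3 ^ j)" if "j \<in> K n" for j
    using Sge[OF that] cnt_rep1[of j n] by (simp add: E_def m_def lam0_def)
  have "poly (R lam0) (-1) = (\<Prod>j\<in>K n. poly (P j) (-1) ^ (if j = 0 then 0 else n div 3 ^ j))"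
    unfolding polyR by (intro prod.cong refl) (simp add: ex0)
  also have "\<dots> = (\<Prod>j\<in>K n - {0}. poly (P j) (-1) ^ (n div 3 ^ j))"
    using prod.remove[OF finK K0, of "\<lambda>j. poly (P j) (-1) ^ (if j = 0 then 0 else n div 3 ^ j)"]
    by simp
  also have "\<dots> = (\<Prod>j\<in>K n - {0}. 3 ^ (n div 3 ^ j))"
  proof (intro prod.cong refl)
    fix j assume "j \<in> K n - {0}"
    then obtain i where "j = Suc i" by (cases j) auto
    then show "poly (P j) (-1) ^ (n div 3 ^ j) = 3 ^ (n div 3 ^ j)" by (simp add: poly_Y)
  qed
  also have "\<dots> = 3 ^ (\<Sum>j\<in>K n - {0}. n div 3 ^ j)" by (simp add: power_sum)
  also have "(\<Sum>j\<in>K n - {0}. n div 3 ^ j) = leg n"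
    unfolding leg_def
  proof (rule sum.mono_neutral_left)
    show "K n - {0} \<subseteq> {1..n}" using K_le by auto
    show "\<forall>i\<in>{1..n} - (K n - {0}). n div 3 ^ i = 0"
    proof
      fix i assume "i \<in> {1..n} - (K n - {0})"
      then have "n < 3 ^ i" by (auto simp: K_def)
      then show "n div 3 ^ i = 0" by (rule div_less)
    qed
  qed simp
  finally have R0: "poly (R lam0) (-1) = 3 ^ leg n" .
  have "poly (num_T n) (-1) = (\<Sum>lam\<in>T. poly (R lam) (-1))" by (simp add: numR poly_sum)
  also have "\<dots> = poly (R lam0) (-1) + (\<Sum>lam\<in>T - {lam0}. poly (R lam) (-1))"
    by (rule sum.remove[OF finT lam0T])
  also have "(\<Sum>lam\<in>T - {lam0}. poly (R lam) (-1)) = 0"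
    by (rule sum.neutral) (auto simp: Rzero)
  finally show ?thesis using R0 by simp
qed

lemma mult_step:
  assumes "\<not> (3::nat) dvd Suc m"
  shows "multiplicity (3::nat) (fact (Suc m)) = multiplicity (3::nat) (fact m)"
proof -
  have "multiplicity (3::nat) (fact (Suc m)) = multiplicity (3::nat) (Suc m * fact m)" by simp
  also have "\<dots> = multiplicity 3 (Suc m) + multiplicity (3::nat) (fact m)"
    by (rule prime_elem_multiplicity_mult_distrib) (auto simp: prime3 intro: prime_imp_prime_elem)
  also have "multiplicity (3::nat) (Suc m) = 0" using assms by (rule not_dvd_imp_multiplicity_0)
  finally show ?thesis by simp
qed

lemma num_fact: "n \<ge> 1 \<Longrightarrow> poly (num_T n) (-1) = 3 ^ multiplicity (3::nat) (fact n)"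
  using main legendre by simp

theorem theorem4:
  shows "(\<forall>n::nat. n \<ge> 1 \<longrightarrow> poly (num_T n) (-1) = 3 ^ multiplicity (3::nat) (fact n))
    \<and> (\<forall>n::nat. n \<ge> 1 \<longrightarrow>
          poly (num_T (3*n)) (-1) = 3 ^ multiplicity (3::nat) (fact (3*n)) \<and>
          poly (num_T (3*n+1)) (-1) = 3 ^ multiplicity (3::nat) (fact (3*n)) \<and>
          poly (num_T (3*n+2)) (-1) = 3 ^ multiplicity (3::nat) (fact (3*n)))"
proof (intro conjI allI impI)
  fix n :: nat assume "n \<ge> 1"
  then show "poly (num_T n) (-1) = 3 ^ multiplicity (3::nat) (fact n)" by (rule num_fact)
next
  fix n :: nat assume n: "n \<ge> 1"
  then show "poly (num_T (3*n)) (-1) = 3 ^ multiplicity (3::nat) (fact (3*n))"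
    using num_fact[of "3*n"] by simp
  have d1: "\<not> (3::nat) dvd Suc (3*n)" by presburger
  have d2: "\<not> (3::nat) dvd Suc (Suc (3*n))" by presburger
  have m1': "multiplicity (3::nat) (fact (Suc (3*n))) = multiplicity (3::nat) (fact (3*n))"
    by (rule mult_step[OF d1])
  have m2': "multiplicity (3::nat) (fact (Suc (Suc (3*n)))) = multiplicity (3::nat) (fact (3*n))"
    using mult_step[OF d2] m1' by (simp only:)
  have e1: "3*n+1 = Suc (3*n)" and e2: "3*n+2 = Suc (Suc (3*n))" by simp_all
  have m1: "multiplicity (3::nat) (fact (3*n+1)) = multiplicity (3::nat) (fact (3*n))"
    unfolding e1 by (rule m1')
  have m2: "multiplicity (3::nat) (fact (3*n+2)) = multiplicity (3::nat) (fact (3*n))"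
    unfolding e2 by (rule m2')
  show "poly (num_T (3*n+1)) (-1) = 3 ^ multiplicity (3::nat) (fact (3*n))"
    using num_fact[of "3*n+1"] m1 by simp
  show "poly (num_T (3*n+2)) (-1) = 3 ^ multiplicity (3::nat) (fact (3*n))"
    using num_fact[of "3*n+2"] m2 by simp
qed

end
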